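(* Let $X$ be the Cantor set, $\alpha$ a minimal homeomorphism of $X$, and $\phi:X\to\operatorname{Isom}(\mathbb{T})$ continuous such that $\alpha\times\phi$ is minimal and not orientation preserving. Let $x_0\in X$ and let $\mathcal P=\{X(v,k):v\in V,\ k=1,\dots,h(v)\}$ be a Kakutani–Rohlin partition for $(X,\alpha)$ such that $x_0\in R(\mathcal P)$ and $o(\phi)$ is constant on each clopen set of $\widetilde{\mathcal P}$. Then $h_\phi$ is equivalent to $\sum_{v\in V,\ o(\phi)_v=1}1_{X(v,h(v))}$ in $K_1(A_{x_0})$.
   Context: $\alpha\times\phi:(x,t)\mapsto(\alpha(x),\phi_x(t))$; $o(\phi)(x)=0$ if $\phi_x$ preserves orientation and $1$ otherwise; $\alpha\times\phi$ is orientation preserving iff $o(\phi)\in\{f-f\circ\alpha^{-1}:f\in C(X,\mathbb{Z}_2)\}$. Define the automorphism $\alpha_\phi^*$ of $C(X,\mathbb{Z})$ by $\alpha_\phi^*(f)(x)=(-1)^{o(\phi)(\alpha^{-1}(x))}f(\alpha^{-1}(x))$ (this is the map induced by $\alpha\times\phi$ on $K_1(C(X\times\mathbb{T}))\cong C(X,\mathbb{Z})$). With $A_{x_0}$ the $C^*$-subalgebra of $C^*(X\times\mathbb{T},\alpha\times\phi)$ generated by $C(X\times\mathbb{T})$ and $uC_0((X\setminus\{x_0\})\times\mathbb{T})$, $K_1(A_{x_0})$ is identified with $C(X,\mathbb{Z})/\{f-\alpha_\phi^*(f):f\in C(X,\mathbb{Z}),f(x_0)=0\}$; "$f$ is equivalent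 to $g$ in $K_1(A_{x_0})$" means $f-g$ lies in that subgroup. $h_\phi\in C(X,\mathbb{Z})$ is $h_\phi(x)=1$ if $o(\phi)(\alpha^{-1}(x))=1$ and $0$ otherwise. A Kakutani–Rohlin partition is a clopen partition $\{X(v,k)\}$ with $\alpha(X(v,k))=X(v,k+1)$ for $k<h(v)$ and $\alpha(\bigcup_vX(v,h(v)))=\bigcup_vX(v,1)$; $R(\mathcal P)=\bigcup_vX(v,h(v))$ is the roof set, $\widetilde{\mathcal P}=\{X(v,k):k<h(v)\}\cup\{R(\mathcal P)\}$, and $o(\phi)_v=\sum_{i=0}^{h(v)-1}o(\phi)(\alpha^i(x))\in\mathbb{Z}_2$ for any $x\in X(v,1)$. *)

theory Defs
  imports "HOL-Analysis.Analysis"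
begin

(* The Cantor space {0,1}^N with the product topology; "X is the Cantor set" means
   X is homeomorphic to it. *)
definition cantor_space :: "(nat \<Rightarrow> bool) topology" where
  "cantor_space = product_topology (\<lambda>_. discrete_topology (UNIV :: bool set)) UNIV"

definition minimal_homeo :: "'a topology \<Rightarrow> ('a \<Rightarrow> 'a) \<Rightarrow> bool" where
  "minimal_homeo X T \<longleftrightarrow> homeomorphic_map X X T \<and>
     (\<forall>C. closedin X C \<and> T ` C = C \<longrightarrow> C = {} \<or> C = topspace X)"

definition circle :: "complex topology" where
  "circle = subtopology euclidean (sphere 0 1)"

definition circle_isom :: "(complex \<Rightarrow> complex) \<Rightarrow> bool" where
  "circle_isom g \<longleftrightarrow> g ` sphere 0 1 = sphere 0 1 \<and>
     (\<forall>s\<in>sphere 0 1. \<forall>t\<in>sphere 0 1. dist (g s) (g t) = dist s t)"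

(* Orientation-preserving isometries of the circle are the rotations. *)
definition orient_pres :: "(complex \<Rightarrow> complex) \<Rightarrow> bool" where
  "orient_pres g \<longleftrightarrow> (\<exists>c. cmod c = 1 \<and> (\<forall>t\<in>sphere 0 1. g t = c * t))"

(* phi : X -> Isom(T) continuous (continuity into Isom(T) with compact-open topology,
   i.e. joint continuity of (x,t) |-> phi_x(t)). *)
definition isom_cocycle :: "'a topology \<Rightarrow> ('a \<Rightarrow> complex \<Rightarrow> complex) \<Rightarrow> bool" where
  "isom_cocycle X \<phi> \<longleftrightarrow> (\<forall>x\<in>topspace X. circle_isom (\<phi> x)) \<and>
     continuous_map (prod_topology X circle) circle (\<lambda>(x,t). \<phi> x t)"

definition skew :: "('a \<Rightarrow> 'a) \<Rightarrow> ('a \<Rightarrow> complex \<Rightarrow> complex) \<Rightarrow> 'a \<times> complex \<Rightarrow> 'a \<times> complex" where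
  "skew \<alpha> \<phi> = (\<lambda>(x,t). (\<alpha> x, \<phi> x t))"

(* o(phi) with values in Z_2 = bool (True = 1). *)
definition ophi :: "('a \<Rightarrow> complex \<Rightarrow> complex) \<Rightarrow> 'a \<Rightarrow> bool" where
  "ophi \<phi> x = (\<not> orient_pres (\<phi> x))"

definition ainv :: "'a topology \<Rightarrow> ('a \<Rightarrow> 'a) \<Rightarrow> 'a \<Rightarrow> 'a" where
  "ainv X \<alpha> = inv_into (topspace X) \<alpha>"

(* alpha x phi orientation preserving iff o(phi) = f - f o alpha^{-1} for some f in C(X,Z_2)
   (subtraction in Z_2 is exclusive or). *)
definition skew_orient_pres :: "'a topology \<Rightarrow> ('a \<Rightarrow> 'a) \<Rightarrow> ('a \<Rightarrow> complex \<Rightarrow> complex) \<Rightarrow> bool" where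
  "skew_orient_pres X \<alpha> \<phi> \<longleftrightarrow>
     (\<exists>f. continuous_map X (discrete_topology (UNIV::bool set)) f \<and>
          (\<forall>x\<in>topspace X. ophi \<phi> x = (f x \<noteq> f (ainv X \<alpha> x))))"

definition astar :: "'a topology \<Rightarrow> ('a \<Rightarrow> 'a) \<Rightarrow> ('a \<Rightarrow> complex \<Rightarrow> complex) \<Rightarrow> ('a \<Rightarrow> int) \<Rightarrow> 'a \<Rightarrow> int" where
  "astar X \<alpha> \<phi> f x = (if ophi \<phi> (ainv X \<alpha> x) then - 1 else 1) * f (ainv X \<alpha> x)"

definition hphi :: "'a topology \<Rightarrow> ('a \<Rightarrow> 'a) \<Rightarrow> ('a \<Rightarrow> complex \<Rightarrow> complex) \<Rightarrow> 'a \<Rightarrow> int" where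
  "hphi X \<alpha> \<phi> x = (if ophi \<phi> (ainv X \<alpha> x) then 1 else 0)"

(* f and g are equivalent in K_1(A_{x0}) = C(X,Z)/{f - alpha_phi^* f : f in C(X,Z), f(x0)=0};
   functions are compared on the space X. *)
definition K1_equiv :: "'a topology \<Rightarrow> ('a \<Rightarrow> 'a) \<Rightarrow> ('a \<Rightarrow> complex \<Rightarrow> complex) \<Rightarrow> 'a
      \<Rightarrow> ('a \<Rightarrow> int) \<Rightarrow> ('a \<Rightarrow> int) \<Rightarrow> bool" where
  "K1_equiv X \<alpha> \<phi> x0 f g \<longleftrightarrow>
     (\<exists>k. continuous_map X euclidean k \<and> k x0 = 0 \<and>
          (\<forall>x\<in>topspace X. f x - g x = k x - astar X \<alpha> \<phi> k x))"

definition KR_partition :: "'a topology \<Rightarrow> ('a \<Rightarrow> 'a) \<Rightarrow> 'v set \<Rightarrow> ('v \<Rightarrow> nat)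
      \<Rightarrow> ('v \<Rightarrow> nat \<Rightarrow> 'a set) \<Rightarrow> bool" where
  "KR_partition X \<alpha> V h P \<longleftrightarrow>
     finite V \<and> (\<forall>v\<in>V. 1 \<le> h v) \<and>
     (\<forall>v\<in>V. \<forall>k\<in>{1..h v}. closedin X (P v k) \<and> openin X (P v k) \<and> P v k \<noteq> {}) \<and>
     (\<forall>v\<in>V. \<forall>k\<in>{1..h v}. \<forall>w\<in>V. \<forall>l\<in>{1..h w}. (v,k) \<noteq> (w,l) \<longrightarrow> P v k \<inter> P w l = {}) \<and>
     (\<Union>v\<in>V. \<Union>k\<in>{1..h v}. P v k) = topspace X \<and>
     (\<forall>v\<in>V. \<forall>k. 1 \<le> k \<and> k < h v \<longrightarrow> \<alpha> ` P v k = P v (Suc k)) \<and>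
     \<alpha> ` (\<Union>v\<in>V. P v (h v)) = (\<Union>v\<in>V. P v 1)"

definition roof :: "'v set \<Rightarrow> ('v \<Rightarrow> nat) \<Rightarrow> ('v \<Rightarrow> nat \<Rightarrow> 'a set) \<Rightarrow> 'a set" where
  "roof V h P = (\<Union>v\<in>V. P v (h v))"

definition tilde_partition :: "'v set \<Rightarrow> ('v \<Rightarrow> nat) \<Rightarrow> ('v \<Rightarrow> nat \<Rightarrow> 'a set) \<Rightarrow> 'a set set" where
  "tilde_partition V h P = {P v k | v k. v \<in> V \<and> 1 \<le> k \<and> k < h v} \<union> {roof V h P}"

definition ophi_tower :: "('a \<Rightarrow> 'a) \<Rightarrow> ('a \<Rightarrow> complex \<Rightarrow> complex) \<Rightarrow> ('v \<Rightarrow> nat)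
      \<Rightarrow> ('v \<Rightarrow> nat \<Rightarrow> 'a set) \<Rightarrow> 'v \<Rightarrow> bool" where
  "ophi_tower \<alpha> \<phi> h P v =
     (let x = (SOME x. x \<in> P v 1) in odd (card {i. i < h v \<and> ophi \<phi> ((\<alpha> ^^ i) x)}))"

end

theory Submission
  imports Defs
begin

theorem lemma6p2:
  fixes X :: "'a topology" and \<alpha> :: "'a \<Rightarrow> 'a" and \<phi> :: "'a \<Rightarrow> complex \<Rightarrow> complex"
    and x0 :: 'a and V :: "'v set" and h :: "'v \<Rightarrow> nat" and P :: "'v \<Rightarrow> nat \<Rightarrow> 'a set"
  assumes cantor: "X homeomorphic_space cantor_space"
    and amin: "minimal_homeo X \<alpha>"
    and phi: "isom_cocycle X \<phi>"
    and skewmin: "minimal_homeo (prod_topology X circle) (skew \<alpha> \<phi>)"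
    and notop: "\<not> skew_orient_pres X \<alpha> \<phi>"
    and x0: "x0 \<in> topspace X"
    and KR: "KR_partition X \<alpha> V h P"
    and x0R: "x0 \<in> roof V h P"
    and const: "\<forall>S\<in>tilde_partition V h P. \<forall>x\<in>S. \<forall>y\<in>S. ophi \<phi> x = ophi \<phi> y"
  shows "K1_equiv X \<alpha> \<phi> x0 (hphi X \<alpha> \<phi>)
           (\<lambda>x. \<Sum>v\<in>{v\<in>V. ophi_tower \<alpha> \<phi> h P v}. if x \<in> P v (h v) then 1 else 0)"
proof -
  have hom: "homeomorphic_map X X \<alpha>" using amin by (simp add: minimal_homeo_def)
  have surj: "\<alpha> ` topspace X = topspace X" using hom homeomorphic_imp_surjective_map by blast
  have KRd: "finite V \<and> (\<forall>v\<in>V. 1 \<le> h v) \<and>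
     (\<forall>v\<in>V. \<forall>k\<in>{1..h v}. closedin X (P v k) \<and> openin X (P v k) \<and> P v k \<noteq> {}) \<and>
     (\<forall>v\<in>V. \<forall>k\<in>{1..h v}. \<forall>w\<in>V. \<forall>l\<in>{1..h w}. (v,k) \<noteq> (w,l) \<longrightarrow> P v k \<inter> P w l = {}) \<and>
     (\<Union>v\<in>V. \<Union>k\<in>{1..h v}. P v k) = topspace X \<and>
     (\<forall>v\<in>V. \<forall>k. 1 \<le> k \<and> k < h v \<longrightarrow> \<alpha> ` P v k = P v (Suc k)) \<and>
     \<alpha> ` (\<Union>v\<in>V. P v (h v)) = (\<Union>v\<in>V. P v 1)"
    using KR unfolding KR_partition_def .
  then have finV: "finite V" and h1': "\<forall>v\<in>V. 1 \<le> h v"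
    and clop': "\<forall>v\<in>V. \<forall>k\<in>{1..h v}. closedin X (P v k) \<and> openin X (P v k) \<and> P v k \<noteq> {}"
    and disj': "\<forall>v\<in>V. \<forall>k\<in>{1..h v}. \<forall>w\<in>V. \<forall>l\<in>{1..h w}. (v,k) \<noteq> (w,l) \<longrightarrow> P v k \<inter> P w l = {}"
    and cover: "(\<Union>v\<in>V. \<Union>k\<in>{1..h v}. P v k) = topspace X"
    and step': "\<forall>v\<in>V. \<forall>k. 1 \<le> k \<and> k < h v \<longrightarrow> \<alpha> ` P v k = P v (Suc k)"
    and top: "\<alpha> ` (\<Union>v\<in>V. P v (h v)) = (\<Union>v\<in>V. P v 1)"
    by simp_all
  have h1: "\<And>v. v\<in>V \<Longrightarrow> 1 \<le> h v" using h1' by blast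
  have clop: "\<And>v k. v\<in>V \<Longrightarrow> k\<in>{1..h v} \<Longrightarrow> openin X (P v k) \<and> P v k \<noteq> {}" using clop' by blast
  have disj: "\<And>v k w l. v\<in>V \<Longrightarrow> k\<in>{1..h v} \<Longrightarrow> w\<in>V \<Longrightarrow> l\<in>{1..h w} \<Longrightarrow> (v,k) \<noteq> (w,l) \<Longrightarrow> P v k \<inter> P w l = {}"
    using disj' by blast
  have step: "\<And>v k. v\<in>V \<Longrightarrow> 1 \<le> k \<Longrightarrow> k < h v \<Longrightarrow> \<alpha> ` P v k = P v (Suc k)" using step' by blast
  have uniq: "v = w \<and> j = l" if "v\<in>V" "j\<in>{1..h v}" "w\<in>V" "l\<in>{1..h w}" "x\<in>P v j" "x\<in>P w l" for v j w l x
    using disj[OF that(1-4)] that(5,6) by blast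
  have sub: "P v j \<subseteq> topspace X" if "v\<in>V" "j\<in>{1..h v}" for v j
  proof
    fix x assume "x \<in> P v j"
    then have "x \<in> (\<Union>v\<in>V. \<Union>k\<in>{1..h v}. P v k)" using that by blast
    then show "x \<in> topspace X" by (simp only: cover)
  qed
  define b where "b v = (SOME x. x \<in> P v 1)" for v
  have bP: "b v \<in> P v 1" if "v\<in>V" for v
  proof -
    have "P v 1 \<noteq> {}" using clop[OF that] h1[OF that] by auto
    then show ?thesis unfolding b_def by (meson ex_in_conv someI_ex)
  qed
  have iterP: "(\<alpha>^^n) (b v) \<in> P v (Suc n)" if "v\<in>V" "n < h v" for v n
    using that(2)
  proof (induction n)
    case 0 then show ?case using bP[OF that(1)] by simp
  next
    case (Suc n)
    then have "(\<alpha>^^n) (b v) \<in> P v (Suc n)" by simp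
    then have "(\<alpha>^^Suc n) (b v) \<in> \<alpha> ` P v (Suc n)" by simp
    also have "\<alpha> ` P v (Suc n) = P v (Suc (Suc n))" using step[OF that(1), of "Suc n"] Suc.prems by simp
    finally show ?case .
  qed
  have constL: "ophi \<phi> x = ophi \<phi> y" if "v\<in>V" "1 \<le> j" "j < h v" "x\<in>P v j" "y\<in>P v j" for v j x y
  proof -
    have "P v j \<in> tilde_partition V h P" unfolding tilde_partition_def using that by blast
    then show ?thesis using const that by blast
  qed
  define oR where "oR = ophi \<phi> x0"
  have roofo: "ophi \<phi> x = oR" if "v\<in>V" "x\<in>P v (h v)" for v x
  proof -
    have "roof V h P \<in> tilde_partition V h P" unfolding tilde_partition_def by blast
    moreover have "x \<in> roof V h P" unfolding roof_def using that by blast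
    ultimately show ?thesis using const x0R unfolding oR_def by blast
  qed
  define par where "par v n = odd (card {i. i < n \<and> ophi \<phi> ((\<alpha>^^i)(b v))})" for v n
  have par0: "par v 0 = False" for v unfolding par_def by simp
  have parSuc: "par v (Suc n) = (par v n \<noteq> ophi \<phi> ((\<alpha>^^n)(b v)))" for v n
  proof -
    let ?A = "{i. i < n \<and> ophi \<phi> ((\<alpha>^^i)(b v))}"
    have fin: "finite ?A" by simp
    have "{i. i < Suc n \<and> ophi \<phi> ((\<alpha>^^i)(b v))} = (if ophi \<phi> ((\<alpha>^^n)(b v)) then insert n ?A else ?A)"
      by (auto simp: less_Suc_eq)
    then show ?thesis unfolding par_def using fin by (auto simp: card_insert_if)
  qed
  have tower: "ophi_tower \<alpha> \<phi> h P v = par v (h v)" for v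
    by (simp add: ophi_tower_def par_def b_def Let_def)
  define S where "S = Sigma V (\<lambda>v. {1..<h v})"
  have finS: "finite S" unfolding S_def using finV by simp
  define k where "k x = (\<Sum>p\<in>S. if x \<in> P (fst p) (snd p) then (of_bool (oR \<noteq> par (fst p) (snd p - 1))::int) else 0)" for x
  have keval: "k x = (if j < h v then of_bool (oR \<noteq> par v (j - 1)) else 0)"
    if "v\<in>V" "j\<in>{1..h v}" "x\<in>P v j" for v j x
  proof -
    have "k x = (\<Sum>p\<in>S. if p = (v,j) then (of_bool (oR \<noteq> par v (j - 1))::int) else 0)"
      unfolding k_def
    proof (rule sum.cong)
      fix p assume "p \<in> S"
      then obtain w l where p: "p = (w,l)" "w\<in>V" "l\<in>{1..<h w}" unfolding S_def by auto
      have "x \<in> P w l \<longleftrightarrow> (w,l) = (v,j)" using uniq[OF that(1,2) p(2), of l x] p(3) that(3) by auto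
      then show "(if x \<in> P (fst p) (snd p) then (of_bool (oR \<noteq> par (fst p) (snd p - 1))::int) else 0) =
          (if p = (v,j) then of_bool (oR \<noteq> par v (j - 1)) else 0)" using p by auto
    qed simp
    also have "\<dots> = (if (v,j) \<in> S then of_bool (oR \<noteq> par v (j - 1)) else 0)"
      using sum.delta[OF finS, of "(v,j)" "\<lambda>_. (of_bool (oR \<noteq> par v (j - 1))::int)"] by simp
    finally show ?thesis using that unfolding S_def by auto
  qed
  define G where "G x = (\<Sum>v\<in>{v\<in>V. ophi_tower \<alpha> \<phi> h P v}. if x \<in> P v (h v) then 1 else (0::int))" for x
  have Geval: "G x = (if j = h v \<and> par v (h v) then 1 else 0)"
    if "v\<in>V" "j\<in>{1..h v}" "x\<in>P v j" for v j x
  proof -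
    have "G x = (\<Sum>w\<in>{v\<in>V. ophi_tower \<alpha> \<phi> h P v}. if w = v then (of_bool (j = h v)::int) else 0)"
      unfolding G_def
    proof (rule sum.cong)
      fix w assume "w \<in> {v\<in>V. ophi_tower \<alpha> \<phi> h P v}"
      then have w: "w \<in> V" by simp
      have "h w \<in> {1..h w}" using h1[OF w] by simp
      then have "x \<in> P w (h w) \<longleftrightarrow> w = v \<and> j = h v" using uniq[OF that(1,2) w, of "h w" x] that(3) by auto
      then show "(if x \<in> P w (h w) then 1 else (0::int)) = (if w = v then of_bool (j = h v) else 0)" by auto
    qed simp
    also have "\<dots> = (if v \<in> {v\<in>V. ophi_tower \<alpha> \<phi> h P v} then of_bool (j = h v) else 0)"
      using sum.delta[of "{v\<in>V. ophi_tower \<alpha> \<phi> h P v}" v "\<lambda>_. (of_bool (j = h v)::int)"] finV by simp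
    finally show ?thesis using that tower by auto
  qed
  have locate: "\<exists>v j. v\<in>V \<and> j\<in>{1..h v} \<and> x\<in>P v j" if "x \<in> topspace X" for x
  proof -
    have "x \<in> (\<Union>v\<in>V. \<Union>k\<in>{1..h v}. P v k)" using that by (simp only: cover)
    then show ?thesis by blast
  qed
  have kcont: "continuous_map X euclidean k"
    unfolding continuous_map_def
  proof (intro conjI allI impI ballI)
    fix U :: "int set" assume "openin euclidean U"
    show "openin X {x \<in> topspace X. k x \<in> U}"
    proof (subst openin_subopen, intro ballI)
      fix x assume x: "x \<in> {x \<in> topspace X. k x \<in> U}"
      then obtain v j where vj: "v\<in>V" "j\<in>{1..h v}" "x\<in>P v j" using locate by blast
      have "P v j \<subseteq> {x \<in> topspace X. k x \<in> U}"
      proof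
        fix z assume "z \<in> P v j"
        then show "z \<in> {x \<in> topspace X. k x \<in> U}"
          using keval[OF vj(1,2)] vj(3) x sub[OF vj(1,2)] by auto
      qed
      then show "\<exists>T. openin X T \<and> x \<in> T \<and> T \<subseteq> {x \<in> topspace X. k x \<in> U}"
        using clop[OF vj(1,2)] vj(3) by blast
    qed
  qed simp
  have k0: "k x0 = 0"
  proof -
    obtain v where v: "v\<in>V" "x0 \<in> P v (h v)" using x0R unfolding roof_def by blast
    show ?thesis using keval[OF v(1) _ v(2)] h1[OF v(1)] by simp
  qed
  have main: "hphi X \<alpha> \<phi> x - G x = k x - astar X \<alpha> \<phi> k x" if x: "x \<in> topspace X" for x
  proof -
    define y where "y = ainv X \<alpha> x"
    have y: "y \<in> topspace X" "\<alpha> y = x" unfolding y_def ainv_def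
      using x surj by (auto intro: inv_into_into f_inv_into_f)
    have hx: "hphi X \<alpha> \<phi> x = of_bool (ophi \<phi> y)" unfolding hphi_def y_def by simp
    have ax: "astar X \<alpha> \<phi> k x = (if ophi \<phi> y then -1 else 1) * k y" unfolding astar_def y_def by simp
    obtain v j where vj: "v\<in>V" "j\<in>{1..h v}" "y\<in>P v j" using locate[OF y(1)] by blast
    show ?thesis
    proof (cases "j < h v")
      case True
      have xP: "x \<in> P v (Suc j)" using step[OF vj(1), of j] True vj(2,3) y(2) by auto
      have jj: "Suc (j - 1) = j" using vj(2) by auto
      have oy: "ophi \<phi> y = ophi \<phi> ((\<alpha>^^(j-1)) (b v))"
        using constL[OF vj(1) _ True vj(3)] iterP[OF vj(1), of "j-1"] jj vj(2) True by auto
      have pj: "par v j = (par v (j-1) \<noteq> ophi \<phi> y)" using parSuc[of v "j-1"] jj oy by simp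
      have ky: "k y = of_bool (oR \<noteq> par v (j-1))" using keval[OF vj] True by simp
      show ?thesis
      proof (cases "Suc j < h v")
        case True2: True
        have kx: "k x = of_bool (oR \<noteq> par v j)" using keval[OF vj(1) _ xP] True2 by simp
        have gx: "G x = 0" using Geval[OF vj(1) _ xP] True2 by simp
        show ?thesis unfolding hx ax kx gx ky pj by (cases "ophi \<phi> y"; cases oR; cases "par v (j-1)") auto
      next
        case False
        then have hj: "Suc j = h v" using True by simp
        have kx: "k x = 0" using keval[OF vj(1) _ xP] hj by simp
        have gx: "G x = of_bool (par v (h v))" using Geval[OF vj(1) _ xP] hj by simp
        have "(\<alpha>^^j) (b v) \<in> P v (h v)" using iterP[OF vj(1), of j] hj by simp
        then have "ophi \<phi> ((\<alpha>^^j) (b v)) = oR" using roofo[OF vj(1)] by blast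
        then have ph: "par v (h v) = (par v j \<noteq> oR)" using parSuc[of v j] hj by simp
        show ?thesis unfolding hx ax kx gx ky ph pj by (cases "ophi \<phi> y"; cases oR; cases "par v (j-1)") auto
      qed
    next
      case False
      then have jh: "j = h v" using vj(2) by simp
      have oy: "ophi \<phi> y = oR" using roofo[OF vj(1)] vj(3) jh by simp
      have ky: "k y = 0" using keval[OF vj] jh by simp
      have "x \<in> (\<Union>v\<in>V. P v 1)" using top vj(1,3) jh y(2) by blast
      then obtain w where w: "w\<in>V" "x \<in> P w 1" by blast
      have w1: "1 \<in> {1..h w}" using h1[OF w(1)] by simp
      show ?thesis
      proof (cases "1 < h w")
        case True
        have kx: "k x = of_bool oR" using keval[OF w(1) w1 w(2)] True par0 by simp
        have gx: "G x = 0" using Geval[OF w(1) w1 w(2)] True by simp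
        show ?thesis unfolding hx ax kx gx ky oy by simp
      next
        case False
        then have hw: "h w = 1" using h1[OF w(1)] by simp
        have kx: "k x = 0" using keval[OF w(1) w1 w(2)] hw by simp
        have "ophi \<phi> (b w) = oR" using roofo[OF w(1)] bP[OF w(1)] hw by simp
        then have "par w (h w) = oR" using parSuc[of w 0] par0 hw by simp
        then have gx: "G x = of_bool oR" using Geval[OF w(1) w1 w(2)] hw by simp
        show ?thesis unfolding hx ax kx gx ky oy by simp
      qed
    qed
  qed
  show ?thesis unfolding K1_equiv_def
    using kcont k0 main unfolding G_def by blast
qed

end
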